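(* Let $\mathcal{X}$ be a covariate space, $\mathbb{P}^X$ a distribution on $\mathcal{X}$, $A\ge 0$, $\sigma>0$, and $\mathcal{C}$ a class of functions $\mathcal{X}\to\mathbb{R}$. For each $n$, let $\mathcal{V}_n$ be a finite set and $\mathcal{C}_n=\{m_{n,v} : v\in\mathcal{V}_n\}\subset\mathcal{C}$ a collection of functions indexed by $\mathcal{V}_n$ such that, for a sequence $\delta_n>0$, $$\int \big(m_{n,v}(x)-m_{n,v'}(x)\big)^2\, d\mathbb{P}^X(x)\ \ge\ \delta_n^2\quad\text{for all } v\neq v'\in\mathcal{V}_n \text{ and all } n.$$ If furthermore $\sup_{v,v'\in\mathcal{V}_n}\sup_x \big(m_{n,v}(x)-m_{n,v'}(x)\big)^2\to 0$ as $n\to\infty$, then $$\mathfrak{M}_n^{\mathrm{EB}}(\mathcal{C};A,\sigma^2)\ \gtrsim\ \frac{\sigma^4}{(\sigma^2+A)^2}\cdot\delta_n^2\cdot \inf_{\hat V_n}\mathbb{P}[\hat V_n\neq V_n].$$ Here $V_n$ is drawn uniformly from $\mathcal{V}_n$, and conditionally on $V_n=v$ the pairs $(X_i,Z_i)_{1\le i\le n}$ are drawn i.i.d. from the model below with regression function $m=m_{n,v}$; the infimum is over all estimators $\hat V_n$ measurable with respect to $(X_i,Z_i)_{1\le i\le n}$.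
   Context: Model: for a function $m:\mathcal{X}\to\mathbb{R}$, data are i.i.d. triples with $X_i\sim\mathbb{P}^X$, $\mu_i\mid X_i\sim N(m(X_i),A)$, $Z_i\mid \mu_i\sim N(\mu_i,\sigma^2)$; only $(X_i,Z_i)$ are observed, $\sigma^2$ known. The Bayes rule is $t^*_{m,A}(x,z)=\frac{A}{\sigma^2+A}z+\frac{\sigma^2}{\sigma^2+A}m(x)$. For a denoiser $t:\mathcal{X}\times\mathbb{R}\to\mathbb{R}$, the excess risk is $L(t;m,A)=\mathbb{E}_{m,A}[(t(X_{n+1},Z_{n+1})-\mu_{n+1})^2]-\mathbb{E}_{m,A}[(t^*_{m,A}(X_{n+1},Z_{n+1})-\mu_{n+1})^2]$, where $(X_{n+1},\mu_{n+1},Z_{n+1})$ is a fresh independent draw from the model. The minimax empirical Bayes regret is $\mathfrak{M}_n^{\mathrm{EB}}(\mathcal{C};A,\sigma^2)=\inf_{\hat t_n}\sup_{m\in\mathcal{C}}\mathbb{E}_{m,A}[L(\hat t_n;m,A)]$, the infimum over denoisers $\hat t_n$ that are measurable functions of $(X_i,Z_i)_{1\le i\le n}$ (they may depend on $A$), the outer expectation over these data. Notation: for sequences $a_n,b_n>0$, $a_n\lesssim b_n$ means $\limsup_n a_n/b_n\le c$ for a constant $c$ not depending on $A,\sigma,n$; $a_n\gtrsim b_n$ means $b_n\lesssim a_n$. *)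

theory Defs
  imports "HOL-Probability.Probability"
begin

definition gauss :: "real \<Rightarrow> real \<Rightarrow> real measure" where
  "gauss mu s = (if s = 0 then return borel mu else density lborel (normal_density mu s))"

text \<open>Mean squared error E[(t(X,Z) - mu)^2] of a denoiser t under the model
  X ~ PX, mu | X ~ N(m X, A), Z | mu ~ N(mu, sigma^2), as an extended nonnegative value.\<close>
definition risk :: "'x measure \<Rightarrow> ('x \<Rightarrow> real) \<Rightarrow> real \<Rightarrow> real \<Rightarrow> ('x \<Rightarrow> real \<Rightarrow> real) \<Rightarrow> ennreal" where
  "risk PX m A \<sigma> t =
     (\<integral>\<^sup>+ x. (\<integral>\<^sup>+ \<mu>. (\<integral>\<^sup>+ z. ennreal ((t x z - \<mu>)\<^sup>2) \<partial>gauss \<mu> \<sigma>) \<partial>gauss (m x) (sqrt A)) \<partial>PX)"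

definition bayes_rule :: "('x \<Rightarrow> real) \<Rightarrow> real \<Rightarrow> real \<Rightarrow> 'x \<Rightarrow> real \<Rightarrow> real" where
  "bayes_rule m A \<sigma> x z = A / (\<sigma>\<^sup>2 + A) * z + \<sigma>\<^sup>2 / (\<sigma>\<^sup>2 + A) * m x"

definition excess_risk :: "'x measure \<Rightarrow> ('x \<Rightarrow> real) \<Rightarrow> real \<Rightarrow> real \<Rightarrow> ('x \<Rightarrow> real \<Rightarrow> real) \<Rightarrow> ennreal" where
  "excess_risk PX m A \<sigma> t = risk PX m A \<sigma> t - risk PX m A \<sigma> (bayes_rule m A \<sigma>)"

definition obs_law :: "'x measure \<Rightarrow> ('x \<Rightarrow> real) \<Rightarrow> real \<Rightarrow> real \<Rightarrow> ('x \<times> real) measure" where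
  "obs_law PX m A \<sigma> =
     PX \<bind> (\<lambda>x. gauss (m x) (sqrt A) \<bind> (\<lambda>\<mu>. distr (gauss \<mu> \<sigma>) (PX \<Otimes>\<^sub>M borel) (\<lambda>z. (x, z))))"

definition data_space :: "'x measure \<Rightarrow> nat \<Rightarrow> (nat \<Rightarrow> 'x \<times> real) measure" where
  "data_space PX n = PiM {..<n} (\<lambda>_. PX \<Otimes>\<^sub>M borel)"

definition sample_law :: "'x measure \<Rightarrow> ('x \<Rightarrow> real) \<Rightarrow> real \<Rightarrow> real \<Rightarrow> nat \<Rightarrow> (nat \<Rightarrow> 'x \<times> real) measure" where
  "sample_law PX m A \<sigma> n = PiM {..<n} (\<lambda>_. obs_law PX m A \<sigma>)"

definition estimators :: "'x measure \<Rightarrow> nat \<Rightarrow> ((nat \<Rightarrow> 'x \<times> real) \<Rightarrow> 'x \<Rightarrow> real \<Rightarrow> real) set" where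
  "estimators PX n = {th. (\<lambda>(D, (x, z)). th D x z) \<in> borel_measurable (data_space PX n \<Otimes>\<^sub>M (PX \<Otimes>\<^sub>M borel))}"

definition minimax_EB :: "'x measure \<Rightarrow> ('x \<Rightarrow> real) set \<Rightarrow> real \<Rightarrow> real \<Rightarrow> nat \<Rightarrow> ennreal" where
  "minimax_EB PX C A \<sigma> n =
     (INF th \<in> estimators PX n. SUP m \<in> C.
        \<integral>\<^sup>+ D. excess_risk PX m A \<sigma> (th D) \<partial>sample_law PX m A \<sigma> n)"

definition min_test_error :: "'x measure \<Rightarrow> 'v set \<Rightarrow> ('v \<Rightarrow> 'x \<Rightarrow> real) \<Rightarrow> real \<Rightarrow> real \<Rightarrow> nat \<Rightarrow> real" where
  "min_test_error PX Vs mf A \<sigma> n =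
     (INF Vh \<in> measurable (data_space PX n) (count_space UNIV).
        (\<Sum>v\<in>Vs. measure (sample_law PX (mf v) A \<sigma> n) {D \<in> space (data_space PX n). Vh D \<noteq> v})
          / real (card Vs))"

end

theory Submission
  imports Defs
begin
lemma nd_moment2:
  assumes "0 < s"
  shows "(\<integral>\<^sup>+x. ennreal (normal_density b s x * (c - x)\<^sup>2) \<partial>lborel) = ennreal ((c - b)\<^sup>2 + s\<^sup>2)"
proof -
  have h0: "has_bochner_integral lborel (\<lambda>x. (c-b)\<^sup>2 * normal_density b s x) ((c-b)\<^sup>2 * 1)"
    apply (rule has_bochner_integral_mult_right)
    using integral_normal_density[OF assms, of b] integrable_normal_density[OF assms, of b]
    by (metis has_bochner_integral_integrable)
  have h1: "has_bochner_integral lborel (\<lambda>x. (-2*(c-b)) * (normal_density b s x * (x - b)^(2*0+1))) ((-2*(c-b)) * 0)"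
    by (rule has_bochner_integral_mult_right) (rule normal_moment_odd[OF assms])
  have h2: "has_bochner_integral lborel (\<lambda>x. normal_density b s x * (x - b)^(2*1)) (fact (2 * 1) / ((2 / s\<^sup>2)^1 * fact 1))"
    by (rule normal_moment_even[OF assms])
  have "has_bochner_integral lborel (\<lambda>x. (c-b)\<^sup>2 * normal_density b s x + (-2*(c-b)) * (normal_density b s x * (x - b)^(2*0+1)) + normal_density b s x * (x - b)^(2*1))
     ((c-b)\<^sup>2 * 1 + (-2*(c-b)) * 0 + fact (2 * 1) / ((2 / s\<^sup>2)^1 * fact 1))"
    by (intro has_bochner_integral_add h0 h1 h2)
  moreover have "(\<lambda>x. (c-b)\<^sup>2 * normal_density b s x + (-2*(c-b)) * (normal_density b s x * (x - b)^(2*0+1)) + normal_density b s x * (x - b)^(2*1))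
     = (\<lambda>x. normal_density b s x * (c - x)\<^sup>2)"
    by (auto simp: fun_eq_iff power2_eq_square algebra_simps)
  moreover have "(c-b)\<^sup>2 * 1 + (-2*(c-b)) * 0 + fact (2 * 1) / ((2 / s\<^sup>2)^1 * fact 1) = (c - b)\<^sup>2 + s\<^sup>2"
    using assms by (simp add: fact_numeral)
  ultimately have hb: "has_bochner_integral lborel (\<lambda>x. normal_density b s x * (c - x)\<^sup>2) ((c - b)\<^sup>2 + s\<^sup>2)"
    by simp
  have i1: "integrable lborel (\<lambda>x. normal_density b s x * (c - x)\<^sup>2)"
    using hb by (rule integrable.intros)
  have i2: "integral\<^sup>L lborel (\<lambda>x. normal_density b s x * (c - x)\<^sup>2) = (c - b)\<^sup>2 + s\<^sup>2"
    using hb by (rule has_bochner_integral_integral_eq)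
  show ?thesis
    using nn_integral_eq_integral[OF i1] i2 by simp
qed
lemma nd_prod:
  fixes \<sigma> A a z \<mu> :: real
  assumes "0<\<sigma>" "0<A"
  shows "normal_density \<mu> \<sigma> z * normal_density a (sqrt A) \<mu> =
     normal_density a (sqrt (\<sigma>\<^sup>2+A)) z * normal_density (A/(\<sigma>\<^sup>2+A)*z + \<sigma>\<^sup>2/(\<sigma>\<^sup>2+A)*a) (sqrt (A*\<sigma>\<^sup>2/(\<sigma>\<^sup>2+A))) \<mu>"
proof -
  have p: "\<sigma>\<^sup>2 + A > 0" using assms by (simp add: add_pos_pos)
  have s2: "(sqrt (\<sigma>\<^sup>2+A))\<^sup>2 = \<sigma>\<^sup>2+A" using p by simp
  have t2: "(sqrt (A*\<sigma>\<^sup>2/(\<sigma>\<^sup>2+A)))\<^sup>2 = A*\<sigma>\<^sup>2/(\<sigma>\<^sup>2+A)" using p assms by simp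
  have a2: "(sqrt A)\<^sup>2 = A" using assms by simp
  have c: "1 / sqrt (2 * pi * \<sigma>\<^sup>2) * (1 / sqrt (2 * pi * A)) = 1 / sqrt (2 * pi * (\<sigma>\<^sup>2+A)) * (1 / sqrt (2 * pi * (A*\<sigma>\<^sup>2/(\<sigma>\<^sup>2+A))))"
  proof -
    have "sqrt (2 * pi * \<sigma>\<^sup>2) * sqrt (2 * pi * A) = sqrt (2 * pi * (\<sigma>\<^sup>2+A)) * sqrt (2 * pi * (A*\<sigma>\<^sup>2/(\<sigma>\<^sup>2+A)))"
      unfolding real_sqrt_mult[symmetric] using p by (simp add: field_simps)
    then show ?thesis by (simp add: divide_simps)
  qed
  have e: "-(z - \<mu>)\<^sup>2 / (2 * \<sigma>\<^sup>2) + -(\<mu> - a)\<^sup>2 / (2 * A) =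
     -(z - a)\<^sup>2 / (2 * (\<sigma>\<^sup>2+A)) + -(\<mu> - (A/(\<sigma>\<^sup>2+A)*z + \<sigma>\<^sup>2/(\<sigma>\<^sup>2+A)*a))\<^sup>2 / (2 * (A*\<sigma>\<^sup>2/(\<sigma>\<^sup>2+A)))"
  proof -
    define S where "S = \<sigma>\<^sup>2+A"
    have Sp: "S > 0" using p S_def by simp
    have s0: "\<sigma>\<^sup>2 > 0" using assms by simp
    have key: "A*S*(z-\<mu>)\<^sup>2 + \<sigma>\<^sup>2*S*(\<mu>-a)\<^sup>2 = A*\<sigma>\<^sup>2*(z-a)\<^sup>2 + (S*\<mu> - A*z - \<sigma>\<^sup>2*a)\<^sup>2"
      unfolding S_def by (simp add: power2_eq_square algebra_simps)
    have l: "-(z - \<mu>)\<^sup>2 / (2 * \<sigma>\<^sup>2) + -(\<mu> - a)\<^sup>2 / (2 * A) = -(A*S*(z-\<mu>)\<^sup>2 + \<sigma>\<^sup>2*S*(\<mu>-a)\<^sup>2) / (2*A*\<sigma>\<^sup>2*S)"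
      using Sp s0 assms by (simp add: field_simps)
    have m: "\<mu> - (A/S*z + \<sigma>\<^sup>2/S*a) = (S*\<mu> - A*z - \<sigma>\<^sup>2*a)/S"
      using Sp by (simp add: field_simps)
    have r: "-(z - a)\<^sup>2 / (2 * S) + -((S*\<mu> - A*z - \<sigma>\<^sup>2*a)/S)\<^sup>2 / (2 * (A*\<sigma>\<^sup>2/S)) = -(A*\<sigma>\<^sup>2*(z-a)\<^sup>2 + (S*\<mu> - A*z - \<sigma>\<^sup>2*a)\<^sup>2) / (2*A*\<sigma>\<^sup>2*S)"
      using Sp s0 assms by (simp add: field_simps power2_eq_square)
    show ?thesis using l r m key unfolding S_def[symmetric] by simp
  qed
  show ?thesis
    unfolding normal_density_def s2 t2 a2
    using c e
    by (smt (verit, ccfv_threshold) exp_add mult.assoc mult.commute)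
qed
lemma gauss_nn:
  assumes "0 < s" "g \<in> borel_measurable borel" "\<And>z. g z \<ge> 0"
  shows "(\<integral>\<^sup>+z. ennreal (g z) \<partial>gauss \<mu> s) = (\<integral>\<^sup>+z. ennreal (normal_density \<mu> s z * g z) \<partial>lborel)"
proof -
  have "(\<integral>\<^sup>+z. ennreal (g z) \<partial>gauss \<mu> s) = (\<integral>\<^sup>+z. ennreal (normal_density \<mu> s z) * ennreal (g z) \<partial>lborel)"
    unfolding gauss_def using assms by (simp add: nn_integral_density)
  also have "\<dots> = (\<integral>\<^sup>+z. ennreal (normal_density \<mu> s z * g z) \<partial>lborel)"
  proof (rule nn_integral_cong)
    fix z show "ennreal (normal_density \<mu> s z) * ennreal (g z) = ennreal (normal_density \<mu> s z * g z)"
      using assms(3)[of z] by (simp add: ennreal_mult)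
  qed
  finally show ?thesis .
qed

lemma nd_total: "0 < s \<Longrightarrow> (\<integral>\<^sup>+z. ennreal (normal_density a s z) \<partial>lborel) = 1"
  using nn_integral_eq_integral[OF integrable_normal_density[of s a]] by simp

lemma G1:
  fixes f :: "real \<Rightarrow> real"
  assumes f: "f \<in> borel_measurable borel" and \<sigma>: "0<\<sigma>" and A: "0 \<le> A"
  shows "(\<integral>\<^sup>+\<mu>. (\<integral>\<^sup>+z. ennreal((f z - \<mu>)\<^sup>2) \<partial>gauss \<mu> \<sigma>) \<partial>gauss a (sqrt A))
     = ennreal (A*\<sigma>\<^sup>2/(\<sigma>\<^sup>2+A)) + (\<integral>\<^sup>+z. ennreal (normal_density a (sqrt (\<sigma>\<^sup>2+A)) z * (f z - (A/(\<sigma>\<^sup>2+A)*z + \<sigma>\<^sup>2/(\<sigma>\<^sup>2+A)*a))\<^sup>2) \<partial>lborel)"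
proof -
  define inner where "inner \<mu> = (\<integral>\<^sup>+z. ennreal (normal_density \<mu> \<sigma> z * (f z - \<mu>)\<^sup>2) \<partial>lborel)" for \<mu>
  have inner_eq: "(\<integral>\<^sup>+z. ennreal((f z - \<mu>)\<^sup>2) \<partial>gauss \<mu> \<sigma>) = inner \<mu>" for \<mu>
    unfolding inner_def using \<sigma> f by (intro gauss_nn) auto
  note f[measurable]
  have inner_meas: "inner \<in> borel_measurable borel"
    unfolding inner_def[abs_def] normal_density_def by measurable
  have L: "(\<integral>\<^sup>+\<mu>. (\<integral>\<^sup>+z. ennreal((f z - \<mu>)\<^sup>2) \<partial>gauss \<mu> \<sigma>) \<partial>gauss a (sqrt A)) = (\<integral>\<^sup>+\<mu>. inner \<mu> \<partial>gauss a (sqrt A))"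
    by (simp add: inner_eq)
  show ?thesis
  proof (cases "A = 0")
    case True
    have "(\<integral>\<^sup>+\<mu>. inner \<mu> \<partial>gauss a (sqrt A)) = inner a"
      unfolding gauss_def using True inner_meas by (simp add: nn_integral_return)
    moreover have "inner a = (\<integral>\<^sup>+z. ennreal (normal_density a (sqrt (\<sigma>\<^sup>2+A)) z * (f z - (A/(\<sigma>\<^sup>2+A)*z + \<sigma>\<^sup>2/(\<sigma>\<^sup>2+A)*a))\<^sup>2) \<partial>lborel)"
      unfolding inner_def using True \<sigma> by simp
    ultimately show ?thesis using L True by simp
  next
    case False
    then have Ap: "0 < A" using A by simp
    define s where "s = sqrt (\<sigma>\<^sup>2+A)"
    define \<tau> where "\<tau> = sqrt (A*\<sigma>\<^sup>2/(\<sigma>\<^sup>2+A))"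
    define t where "t z = A/(\<sigma>\<^sup>2+A)*z + \<sigma>\<^sup>2/(\<sigma>\<^sup>2+A)*a" for z
    have p: "\<sigma>\<^sup>2 + A > 0" using \<sigma> A by (simp add: add_pos_nonneg)
    have sp: "0 < s" unfolding s_def using p by simp
    have \<tau>p: "0 < \<tau>" unfolding \<tau>_def using p Ap \<sigma> by simp
    have \<tau>2: "\<tau>\<^sup>2 = A*\<sigma>\<^sup>2/(\<sigma>\<^sup>2+A)" unfolding \<tau>_def using p Ap by simp
    have "(\<integral>\<^sup>+\<mu>. inner \<mu> \<partial>gauss a (sqrt A)) = (\<integral>\<^sup>+\<mu>. ennreal (normal_density a (sqrt A) \<mu>) * inner \<mu> \<partial>lborel)"
      unfolding gauss_def using Ap inner_meas by (simp add: nn_integral_density)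
    also have "\<dots> = (\<integral>\<^sup>+\<mu>. (\<integral>\<^sup>+z. ennreal (normal_density a (sqrt A) \<mu>) * ennreal (normal_density \<mu> \<sigma> z * (f z - \<mu>)\<^sup>2) \<partial>lborel) \<partial>lborel)"
      unfolding inner_def using f by (subst nn_integral_cmult) auto
    also have "\<dots> = (\<integral>\<^sup>+\<mu>. (\<integral>\<^sup>+z. ennreal (normal_density a s z * (normal_density (t z) \<tau> \<mu> * (f z - \<mu>)\<^sup>2)) \<partial>lborel) \<partial>lborel)"
    proof (intro nn_integral_cong)
      fix \<mu> z
      have "normal_density \<mu> \<sigma> z * normal_density a (sqrt A) \<mu> = normal_density a s z * normal_density (t z) \<tau> \<mu>"
        unfolding s_def \<tau>_def t_def by (rule nd_prod[OF \<sigma> Ap])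
      then show "ennreal (normal_density a (sqrt A) \<mu>) * ennreal (normal_density \<mu> \<sigma> z * (f z - \<mu>)\<^sup>2) =
          ennreal (normal_density a s z * (normal_density (t z) \<tau> \<mu> * (f z - \<mu>)\<^sup>2))"
        by (simp add: ennreal_mult[symmetric] mult_ac)
    qed
    also have "\<dots> = (\<integral>\<^sup>+z. (\<integral>\<^sup>+\<mu>. ennreal (normal_density a s z * (normal_density (t z) \<tau> \<mu> * (f z - \<mu>)\<^sup>2)) \<partial>lborel) \<partial>lborel)"
      unfolding t_def normal_density_def by (intro lborel_pair.Fubini') measurable
    also have "\<dots> = (\<integral>\<^sup>+z. ennreal (normal_density a s z) * ennreal ((f z - t z)\<^sup>2 + \<tau>\<^sup>2) \<partial>lborel)"
    proof (intro nn_integral_cong)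
      fix z
      have "(\<integral>\<^sup>+\<mu>. ennreal (normal_density a s z * (normal_density (t z) \<tau> \<mu> * (f z - \<mu>)\<^sup>2)) \<partial>lborel)
         = (\<integral>\<^sup>+\<mu>. ennreal (normal_density a s z) * ennreal (normal_density (t z) \<tau> \<mu> * (f z - \<mu>)\<^sup>2) \<partial>lborel)"
        by (simp add: ennreal_mult)
      also have "\<dots> = ennreal (normal_density a s z) * (\<integral>\<^sup>+\<mu>. ennreal (normal_density (t z) \<tau> \<mu> * (f z - \<mu>)\<^sup>2) \<partial>lborel)"
        by (subst nn_integral_cmult) auto
      also have "\<dots> = ennreal (normal_density a s z) * ennreal ((f z - t z)\<^sup>2 + \<tau>\<^sup>2)"
        using nd_moment2[OF \<tau>p, of "t z" "f z"] by simp
      finally show "(\<integral>\<^sup>+\<mu>. ennreal (normal_density a s z * (normal_density (t z) \<tau> \<mu> * (f z - \<mu>)\<^sup>2)) \<partial>lborel)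
         = ennreal (normal_density a s z) * ennreal ((f z - t z)\<^sup>2 + \<tau>\<^sup>2)" .
    qed
    also have "\<dots> = (\<integral>\<^sup>+z. ennreal (normal_density a s z * (f z - t z)\<^sup>2) + ennreal (\<tau>\<^sup>2) * ennreal (normal_density a s z) \<partial>lborel)"
      by (intro nn_integral_cong) (simp add: ennreal_mult[symmetric] distrib_left ennreal_plus[symmetric] mult_ac del: ennreal_plus)
    also have "\<dots> = (\<integral>\<^sup>+z. ennreal (normal_density a s z * (f z - t z)\<^sup>2) \<partial>lborel) + ennreal (\<tau>\<^sup>2) * (\<integral>\<^sup>+z. ennreal (normal_density a s z) \<partial>lborel)"
      using f unfolding t_def by (subst nn_integral_add) (auto simp: nn_integral_cmult)
    also have "\<dots> = ennreal (A*\<sigma>\<^sup>2/(\<sigma>\<^sup>2+A)) + (\<integral>\<^sup>+z. ennreal (normal_density a (sqrt (\<sigma>\<^sup>2+A)) z * (f z - (A/(\<sigma>\<^sup>2+A)*z + \<sigma>\<^sup>2/(\<sigma>\<^sup>2+A)*a))\<^sup>2) \<partial>lborel)"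
      using nd_total[OF sp, of a] \<tau>2 unfolding s_def t_def by (simp add: add.commute)
    finally show ?thesis using L by simp
  qed
qed

lemma nd_lower:
  assumes s: "0 < s" and z: "\<bar>z - a\<bar> \<le> s"
  shows "normal_density a s z \<ge> 1/(6* s)"
proof -
  have "(z-a)\<^sup>2 \<le> s\<^sup>2" using power_mono[OF z abs_ge_zero, of 2] by simp
  then have "(z-a)\<^sup>2/(2* s\<^sup>2) \<le> 1/2" using s by (simp add: field_simps)
  then have "exp (-(z - a)\<^sup>2/ (2 * s\<^sup>2)) \<ge> 1/2"
    using exp_ge_add_one_self[of "-(z - a)\<^sup>2/ (2 * s\<^sup>2)"] by simp
  moreover have "sqrt (2 * pi * s\<^sup>2) \<le> 3 * s"
  proof -
    have "sqrt (2 * pi * s\<^sup>2) = sqrt (2*pi) * s" using s by (simp add: real_sqrt_mult)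
    moreover have "sqrt (2*pi) \<le> 3"
      using pi_less_4 by (intro real_le_lsqrt) auto
    ultimately show ?thesis using s by simp
  qed
  moreover have "sqrt (2 * pi * s\<^sup>2) > 0" using s by simp
  ultimately have "1 / sqrt (2 * pi * s\<^sup>2) * exp (-(z - a)\<^sup>2/ (2 * s\<^sup>2)) \<ge> 1/(3* s) * (1/2)"
    using s by (intro mult_mono) (auto simp: field_simps)
  then show ?thesis unfolding normal_density_def by simp
qed

lemma nd_ratio:
  assumes s: "0 < s" and z: "\<bar>z - a\<bar> \<le> s" and ab: "\<bar>a - b\<bar> \<le> s/2"
  shows "normal_density b s z \<ge> normal_density a s z / 3"
proof -
  have "(z-b)\<^sup>2 - (z-a)\<^sup>2 = (a-b)*(2*(z-a) + (a-b))" by (simp add: power2_eq_square algebra_simps)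
  also have "\<dots> \<le> \<bar>a-b\<bar>*(2*\<bar>z-a\<bar> + \<bar>a-b\<bar>)"
  proof -
    have 1: "(a-b)*(2*(z-a)+(a-b)) \<le> \<bar>a-b\<bar> * \<bar>2*(z-a)+(a-b)\<bar>" by (metis abs_ge_self abs_mult)
    have 2: "\<bar>2*(z-a)+(a-b)\<bar> \<le> 2*\<bar>z-a\<bar> + \<bar>a-b\<bar>" by (smt (verit))
    show ?thesis using 1 mult_left_mono[OF 2 abs_ge_zero[of "a-b"]] by linarith
  qed
  also have "\<dots> \<le> (s/2)*(2* s + s/2)"
    using ab z by (intro mult_mono add_mono) auto
  also have "\<dots> \<le> 2* s\<^sup>2" using s by (simp add: power2_eq_square field_simps)
  finally have "(z-b)\<^sup>2 - (z-a)\<^sup>2 \<le> 2* s\<^sup>2" .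
  then have "-(z - b)\<^sup>2/ (2 * s\<^sup>2) \<ge> -(z - a)\<^sup>2/ (2 * s\<^sup>2) - 1"
  proof -
    assume h: "(z-b)\<^sup>2 - (z-a)\<^sup>2 \<le> 2* s\<^sup>2"
    have e: "-(z-b)\<^sup>2/(2* s\<^sup>2) - (-(z-a)\<^sup>2/(2* s\<^sup>2) - 1) = ((z-a)\<^sup>2 - (z-b)\<^sup>2 + 2* s\<^sup>2)/(2* s\<^sup>2)"
      using s by (simp add: field_simps)
    have "((z-a)\<^sup>2 - (z-b)\<^sup>2 + 2* s\<^sup>2)/(2* s\<^sup>2) \<ge> 0" using h s by (intro divide_nonneg_pos) auto
    then show ?thesis using e by linarith
  qed
  then have "exp (-(z - b)\<^sup>2/ (2 * s\<^sup>2)) \<ge> exp (-(z - a)\<^sup>2/ (2 * s\<^sup>2) - 1)" by simp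
  moreover have "exp (-(z - a)\<^sup>2/ (2 * s\<^sup>2) - 1) = exp (-(z - a)\<^sup>2/ (2 * s\<^sup>2)) / exp 1"
    by (simp add: exp_diff)
  moreover have "exp (-(z - a)\<^sup>2/ (2 * s\<^sup>2)) / exp 1 \<ge> exp (-(z - a)\<^sup>2/ (2 * s\<^sup>2)) / 3"
    using exp_le by (intro divide_left_mono) auto
  ultimately have "exp (-(z - b)\<^sup>2/ (2 * s\<^sup>2)) \<ge> exp (-(z - a)\<^sup>2/ (2 * s\<^sup>2)) / 3" by linarith
  then have "1 / sqrt (2 * pi * s\<^sup>2) * (exp (-(z - a)\<^sup>2/ (2 * s\<^sup>2)) / 3) \<le> 1 / sqrt (2 * pi * s\<^sup>2) * exp (-(z - b)\<^sup>2/ (2 * s\<^sup>2))"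
    by (intro mult_left_mono) auto
  then show ?thesis unfolding normal_density_def by simp
qed

lemma quad_lower:
  fixes p q u d :: real
  assumes "0 \<le> p" "q \<ge> p/3"
  shows "p*d\<^sup>2/4 \<le> p*u\<^sup>2 + q*(u+d)\<^sup>2"
proof -
  have "q*(u+d)\<^sup>2 \<ge> (p/3)*(u+d)\<^sup>2" using assms by (intro mult_right_mono) auto
  moreover have "p*(u\<^sup>2 + (u+d)\<^sup>2/3 - d\<^sup>2/4) \<ge> 0"
  proof -
    have X: "u\<^sup>2 + (u+d)\<^sup>2/3 - d\<^sup>2/4 = (4*u+d)\<^sup>2/12" by (simp add: power2_eq_square field_simps)
    have "u\<^sup>2 + (u+d)\<^sup>2/3 - d\<^sup>2/4 \<ge> 0" unfolding X by simp
    then show ?thesis using assms by simp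
  qed
  moreover have "p*(u\<^sup>2 + (u+d)\<^sup>2/3 - d\<^sup>2/4) = p*u\<^sup>2 + (p/3)*(u+d)\<^sup>2 - p*d\<^sup>2/4" by (simp add: algebra_simps)
  ultimately show ?thesis by linarith
qed

lemma G2:
  assumes s: "0 < s" and ab: "(a-b)\<^sup>2 \<le> s\<^sup>2/4" and u: "u \<in> borel_measurable borel"
  shows "ennreal (d\<^sup>2/12) \<le> (\<integral>\<^sup>+z. ennreal (normal_density a s z * (u z)\<^sup>2) \<partial>lborel) + (\<integral>\<^sup>+z. ennreal (normal_density b s z * (u z + d)\<^sup>2) \<partial>lborel)"
proof -
  note u[measurable]
  have ab': "\<bar>a - b\<bar> \<le> s/2"
  proof -
    have "(a-b)\<^sup>2 \<le> (s/2)\<^sup>2" using ab by (simp add: power_divide)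
    then show ?thesis using abs_le_square_iff[of "a-b" "s/2"] s by simp
  qed
  have "ennreal (d\<^sup>2/12) = ennreal (d\<^sup>2/(24* s)) * emeasure lborel {a-s..a+s}"
    using s by (simp add: ennreal_mult[symmetric] field_simps)
  also have "\<dots> = (\<integral>\<^sup>+z. ennreal (d\<^sup>2/(24* s)) * indicator {a-s..a+s} z \<partial>lborel)"
    by (simp add: nn_integral_cmult_indicator)
  also have "\<dots> \<le> (\<integral>\<^sup>+z. ennreal (normal_density a s z * (u z)\<^sup>2) + ennreal (normal_density b s z * (u z + d)\<^sup>2) \<partial>lborel)"
  proof (intro nn_integral_mono)
    fix z
    show "ennreal (d\<^sup>2/(24* s)) * indicator {a-s..a+s} z \<le> ennreal (normal_density a s z * (u z)\<^sup>2) + ennreal (normal_density b s z * (u z + d)\<^sup>2)"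
    proof (cases "z \<in> {a-s..a+s}")
      case True
      then have zi: "\<bar>z - a\<bar> \<le> s" by auto
      have p1: "normal_density a s z \<ge> 1/(6* s)" by (rule nd_lower[OF s zi])
      have q1: "normal_density b s z \<ge> normal_density a s z / 3" by (rule nd_ratio[OF s zi ab'])
      have "d\<^sup>2/(24* s) = (1/(6* s))*d\<^sup>2/4" by (simp add: field_simps)
      also have "\<dots> \<le> normal_density a s z*d\<^sup>2/4" using p1 by (intro divide_right_mono mult_right_mono) auto
      also have "\<dots> \<le> normal_density a s z * (u z)\<^sup>2 + normal_density b s z * (u z + d)\<^sup>2"
        by (rule quad_lower) (use q1 in auto)
      finally have fin: "d\<^sup>2/(24 * s) \<le> normal_density a s z * (u z)\<^sup>2 + normal_density b s z * (u z + d)\<^sup>2" .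
      then show ?thesis using True by (simp add: ennreal_plus[symmetric] ennreal_leI del: ennreal_plus)
    qed simp
  qed
  also have "\<dots> = (\<integral>\<^sup>+z. ennreal (normal_density a s z * (u z)\<^sup>2) \<partial>lborel) + (\<integral>\<^sup>+z. ennreal (normal_density b s z * (u z + d)\<^sup>2) \<partial>lborel)"
    unfolding normal_density_def by (intro nn_integral_add) measurable
  finally show ?thesis .
qed

lemma excess_formula:
  fixes PX :: "'x measure" and t :: "'x \<Rightarrow> real \<Rightarrow> real"
  assumes PX: "prob_space PX" and A: "0 \<le> A" and \<sigma>: "0 < \<sigma>" and m: "m \<in> borel_measurable PX"
    and t: "(\<lambda>(x,z). t x z) \<in> borel_measurable (PX \<Otimes>\<^sub>M borel)"
  shows "excess_risk PX m A \<sigma> t = (\<integral>\<^sup>+x. (\<integral>\<^sup>+z. ennreal (normal_density (m x) (sqrt (\<sigma>\<^sup>2+A)) z * (t x z - bayes_rule m A \<sigma> x z)\<^sup>2) \<partial>lborel) \<partial>PX)"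
proof -
  interpret prob_space PX by (rule PX)
  have tm[measurable]: "(\<lambda>y. t (f y) (g y)) \<in> borel_measurable M" if "f \<in> measurable M PX" "g \<in> borel_measurable M" for f g and M :: "'b measure"
    using measurable_compose[OF measurable_Pair[OF that] t] by simp
  note m[measurable]
  have gen: "risk PX m A \<sigma> tt = ennreal (A*\<sigma>\<^sup>2/(\<sigma>\<^sup>2+A)) + (\<integral>\<^sup>+x. (\<integral>\<^sup>+z. ennreal (normal_density (m x) (sqrt (\<sigma>\<^sup>2+A)) z * (tt x z - bayes_rule m A \<sigma> x z)\<^sup>2) \<partial>lborel) \<partial>PX)"
    if ttc: "(\<lambda>(x,z). tt x z) \<in> borel_measurable (PX \<Otimes>\<^sub>M borel)" for tt
  proof -
    have ttm[measurable]: "(\<lambda>y. tt (f y) (g y)) \<in> borel_measurable M" if "f \<in> measurable M PX" "g \<in> borel_measurable M" for f g and M :: "'c measure"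
      using measurable_compose[OF measurable_Pair[OF that] ttc] by simp
    have "risk PX m A \<sigma> tt = (\<integral>\<^sup>+x. ennreal (A*\<sigma>\<^sup>2/(\<sigma>\<^sup>2+A)) + (\<integral>\<^sup>+z. ennreal (normal_density (m x) (sqrt (\<sigma>\<^sup>2+A)) z * (tt x z - bayes_rule m A \<sigma> x z)\<^sup>2) \<partial>lborel) \<partial>PX)"
      unfolding risk_def
    proof (intro nn_integral_cong)
      fix x assume x: "x \<in> space PX"
      have "tt x \<in> borel_measurable borel"
        using measurable_Pair2[OF ttc x] by simp
      from G1[OF this \<sigma> A, of "m x"] show "(\<integral>\<^sup>+ \<mu>. (\<integral>\<^sup>+ z. ennreal ((tt x z - \<mu>)\<^sup>2) \<partial>gauss \<mu> \<sigma>) \<partial>gauss (m x) (sqrt A)) =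
         ennreal (A*\<sigma>\<^sup>2/(\<sigma>\<^sup>2+A)) + (\<integral>\<^sup>+z. ennreal (normal_density (m x) (sqrt (\<sigma>\<^sup>2+A)) z * (tt x z - bayes_rule m A \<sigma> x z)\<^sup>2) \<partial>lborel)"
        by (simp add: bayes_rule_def)
    qed
    also have "\<dots> = ennreal (A*\<sigma>\<^sup>2/(\<sigma>\<^sup>2+A)) + (\<integral>\<^sup>+x. (\<integral>\<^sup>+z. ennreal (normal_density (m x) (sqrt (\<sigma>\<^sup>2+A)) z * (tt x z - bayes_rule m A \<sigma> x z)\<^sup>2) \<partial>lborel) \<partial>PX)"
      by (subst nn_integral_add) (auto simp: bayes_rule_def normal_density_def emeasure_space_1)
    finally show ?thesis .
  qed
  have bm: "(\<lambda>(x,z). bayes_rule m A \<sigma> x z) \<in> borel_measurable (PX \<Otimes>\<^sub>M borel)"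
    unfolding bayes_rule_def by measurable
  have b: "risk PX m A \<sigma> (bayes_rule m A \<sigma>) = ennreal (A*\<sigma>\<^sup>2/(\<sigma>\<^sup>2+A))"
    using gen[OF bm] by simp
  show ?thesis unfolding excess_risk_def b gen[OF t]
    by simp
qed

lemma two_point:
  fixes PX :: "'x measure" and t :: "'x \<Rightarrow> real \<Rightarrow> real"
  assumes PX: "prob_space PX" and A: "0 \<le> A" and \<sigma>: "0 < \<sigma>"
    and mv: "mv \<in> borel_measurable PX" and mw: "mw \<in> borel_measurable PX"
    and t: "(\<lambda>(x,z). t x z) \<in> borel_measurable (PX \<Otimes>\<^sub>M borel)"
    and close: "\<And>x. x \<in> space PX \<Longrightarrow> (mv x - mw x)\<^sup>2 \<le> (\<sigma>\<^sup>2+A)/4"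
  shows "ennreal (\<sigma>^4/(\<sigma>\<^sup>2+A)\<^sup>2/12) * (\<integral>\<^sup>+x. ennreal ((mv x - mw x)\<^sup>2) \<partial>PX)
     \<le> excess_risk PX mv A \<sigma> t + excess_risk PX mw A \<sigma> t"
proof -
  interpret prob_space PX by (rule PX)
  have tm[measurable]: "(\<lambda>y. t (f y) (g y)) \<in> borel_measurable M" if "f \<in> measurable M PX" "g \<in> borel_measurable M" for f g and M :: "'b measure"
    using measurable_compose[OF measurable_Pair[OF that] t] by simp
  note mv[measurable] mw[measurable]
  define s where "s = sqrt (\<sigma>\<^sup>2+A)"
  have p: "\<sigma>\<^sup>2 + A > 0" using \<sigma> A by (simp add: add_pos_nonneg)
  have sp: "0 < s" unfolding s_def using p by simp
  have s2: "s\<^sup>2 = \<sigma>\<^sup>2+A" unfolding s_def using p by simp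
  define k where "k = \<sigma>\<^sup>2/(\<sigma>\<^sup>2+A)"
  have k2: "\<sigma>^4/(\<sigma>\<^sup>2+A)\<^sup>2 = k\<^sup>2" unfolding k_def by (simp add: power_divide power2_eq_square power4_eq_xxxx)
  define J where "J mm x = (\<integral>\<^sup>+z. ennreal (normal_density (mm x) s z * (t x z - bayes_rule mm A \<sigma> x z)\<^sup>2) \<partial>lborel)" for mm x
  have ev: "excess_risk PX mv A \<sigma> t = (\<integral>\<^sup>+x. J mv x \<partial>PX)"
    unfolding J_def s_def by (rule excess_formula[OF PX A \<sigma> mv t])
  have ew: "excess_risk PX mw A \<sigma> t = (\<integral>\<^sup>+x. J mw x \<partial>PX)"
    unfolding J_def s_def by (rule excess_formula[OF PX A \<sigma> mw t])
  have Jv: "J mv \<in> borel_measurable PX"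
    unfolding J_def[abs_def] bayes_rule_def normal_density_def by measurable
  have Jw: "J mw \<in> borel_measurable PX"
    unfolding J_def[abs_def] bayes_rule_def normal_density_def by measurable
  have "ennreal (\<sigma>^4/(\<sigma>\<^sup>2+A)\<^sup>2/12) * (\<integral>\<^sup>+x. ennreal ((mv x - mw x)\<^sup>2) \<partial>PX)
      = (\<integral>\<^sup>+x. ennreal ((k*(mv x - mw x))\<^sup>2/12) \<partial>PX)"
    by (subst nn_integral_cmult[symmetric]) (auto simp: k2 ennreal_mult[symmetric] power_mult_distrib intro!: nn_integral_cong)
  also have "\<dots> \<le> (\<integral>\<^sup>+x. J mv x + J mw x \<partial>PX)"
  proof (intro nn_integral_mono)
    fix x assume x: "x \<in> space PX"
    have u: "(\<lambda>z. t x z - bayes_rule mv A \<sigma> x z) \<in> borel_measurable borel"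
      using x unfolding bayes_rule_def by measurable
    have cl: "(mv x - mw x)\<^sup>2 \<le> s\<^sup>2/4" using close[OF x] s2 by simp
    have bd: "bayes_rule mv A \<sigma> x z - bayes_rule mw A \<sigma> x z = k*(mv x - mw x)" for z
      unfolding bayes_rule_def k_def by (simp add: right_diff_distrib)
    have d: "t x z - bayes_rule mw A \<sigma> x z = (t x z - bayes_rule mv A \<sigma> x z) + k*(mv x - mw x)" for z
      using bd[of z] by linarith
    from G2[OF sp cl u, of "k*(mv x - mw x)"]
    show "ennreal ((k*(mv x - mw x))\<^sup>2/12) \<le> J mv x + J mw x"
      unfolding J_def d by simp
  qed
  also have "\<dots> = excess_risk PX mv A \<sigma> t + excess_risk PX mw A \<sigma> t"
    unfolding ev ew using Jv Jw by (rule nn_integral_add)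
  finally show ?thesis .
qed

fun pick :: "('v \<Rightarrow> bool) \<Rightarrow> 'v list \<Rightarrow> 'v \<Rightarrow> 'v" where
  "pick P [] d = d"
| "pick P (w#ws) d = (if P w then w else pick P ws d)"

lemma pick_prop: "\<exists>w\<in>set xs. P w \<Longrightarrow> pick P xs d \<in> set xs \<and> P (pick P xs d)"
  by (induction xs) auto

lemma pick_meas:
  assumes "\<And>w. w \<in> set xs \<Longrightarrow> {D\<in>space M. P w D} \<in> sets M"
  shows "(\<lambda>D. pick (\<lambda>w. P w D) xs d) \<in> measurable M (count_space UNIV)"
  using assms
proof (induction xs)
  case Nil then show ?case by simp
next
  case (Cons w ws)
  have "(\<lambda>D. if P w D then w else pick (\<lambda>w. P w D) ws d) \<in> measurable M (count_space UNIV)"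
    using Cons by (intro measurable_If) auto
  then show ?case by simp
qed

lemma ennreal_measure_le: "ennreal (measure M S) \<le> emeasure M S"
  unfolding measure_def by (cases "emeasure M S = top") (auto simp: less_top)

lemma sets_obs_law:
  assumes "prob_space PX"
  shows "sets (obs_law PX m A \<sigma>) = sets (PX \<Otimes>\<^sub>M borel)"
proof -
  interpret prob_space PX by (rule assms)
  have sg: "space (gauss a b) = UNIV" for a b unfolding gauss_def by simp
  show ?thesis unfolding obs_law_def
    using not_empty by (intro sets_bind) (auto simp: sg intro!: sets_bind)
qed

lemma sets_sample_law:
  assumes "prob_space PX"
  shows "sets (sample_law PX m A \<sigma> n) = sets (data_space PX n)"
  unfolding sample_law_def data_space_def
  by (rule sets_PiM_cong) (auto simp: sets_obs_law[OF assms])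

lemma main_lemma:
  fixes PX :: "'x measure" and C :: "('x \<Rightarrow> real) set" and V :: "nat \<Rightarrow> 'v set"
    and m :: "nat \<Rightarrow> 'v \<Rightarrow> 'x \<Rightarrow> real" and \<delta> :: "nat \<Rightarrow> real"
  assumes PX: "prob_space PX" and A: "A \<ge> 0" and \<sigma>: "\<sigma> > 0"
    and V: "\<forall>n. finite (V n) \<and> V n \<noteq> {}"
    and mC: "\<forall>n. \<forall>v\<in>V n. m n v \<in> C \<and> m n v \<in> borel_measurable PX"
    and sep: "\<forall>n. \<forall>v\<in>V n. \<forall>v'\<in>V n. v \<noteq> v' \<longrightarrow>
           (\<integral>\<^sup>+ x. ennreal ((m n v x - m n v' x)\<^sup>2) \<partial>PX) \<ge> ennreal ((\<delta> n)\<^sup>2)"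
    and lim: "((\<lambda>n. SUP v\<in>V n. SUP v'\<in>V n. SUP x\<in>space PX. ereal ((m n v x - m n v' x)\<^sup>2))
           \<longlonglongrightarrow> 0)"
  shows "\<forall>\<^sub>F n in sequentially.
           ennreal (\<sigma>^4 / (\<sigma>\<^sup>2 + A)\<^sup>2 * (\<delta> n)\<^sup>2 * min_test_error PX (V n) (m n) A \<sigma> n)
             \<le> ennreal 24 * minimax_EB PX C A \<sigma> n"
proof -
  interpret prob_space PX by (rule PX)
  have p: "\<sigma>\<^sup>2 + A > 0" using \<sigma> A by (simp add: add_pos_nonneg)
  have "ereal 0 < ereal (\<sigma>\<^sup>2/4)" using \<sigma> by simp
  from order_tendstoD(2)[OF lim[unfolded zero_ereal_def] this]
  have ev: "\<forall>\<^sub>F n in sequentially. (SUP v\<in>V n. SUP v'\<in>V n. SUP x\<in>space PX. ereal ((m n v x - m n v' x)\<^sup>2)) < ereal (\<sigma>\<^sup>2/4)" .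
  show ?thesis
  proof (rule eventually_mono[OF ev])
    fix n
    assume hS: "(SUP v\<in>V n. SUP v'\<in>V n. SUP x\<in>space PX. ereal ((m n v x - m n v' x)\<^sup>2)) < ereal (\<sigma>\<^sup>2/4)"
    define W where "W = V n"
    define mm where "mm = m n"
    have Wf: "finite W" and Wne: "W \<noteq> {}" using V unfolding W_def by auto
    have mmC: "\<And>v. v \<in> W \<Longrightarrow> mm v \<in> C" and mmM: "\<And>v. v \<in> W \<Longrightarrow> mm v \<in> borel_measurable PX"
      using mC unfolding W_def mm_def by auto
    have close: "(mm v x - mm w x)\<^sup>2 \<le> (\<sigma>\<^sup>2+A)/4" if "v \<in> W" "w \<in> W" "x \<in> space PX" for v w x
    proof -
      have "ereal ((mm v x - mm w x)\<^sup>2) \<le> (SUP x\<in>space PX. ereal ((m n v x - m n w x)\<^sup>2))"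
        using that unfolding mm_def by (intro SUP_upper) auto
      also have "\<dots> \<le> (SUP v'\<in>V n. SUP x\<in>space PX. ereal ((m n v x - m n v' x)\<^sup>2))"
        using that unfolding W_def by (intro SUP_upper) auto
      also have "\<dots> \<le> (SUP v\<in>V n. SUP v'\<in>V n. SUP x\<in>space PX. ereal ((m n v x - m n v' x)\<^sup>2))"
        using that unfolding W_def by (intro SUP_upper) auto
      also have "\<dots> < ereal (\<sigma>\<^sup>2/4)" by (rule hS)
      finally have "(mm v x - mm w x)\<^sup>2 < \<sigma>\<^sup>2/4" by simp
      then show ?thesis using A by (simp add: divide_right_mono)
    qed
    define k2 where "k2 = \<sigma>^4 / (\<sigma>\<^sup>2 + A)\<^sup>2"
    have k2nn: "k2 \<ge> 0" unfolding k2_def by simp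
    define K where "K = k2 * (\<delta> n)\<^sup>2 / 24"
    have Knn: "K \<ge> 0" unfolding K_def using k2nn by simp
    define SupC where "SupC th = (SUP mf\<in>C. \<integral>\<^sup>+ D. excess_risk PX mf A \<sigma> (th D) \<partial>sample_law PX mf A \<sigma> n)" for th
    define mte where "mte = min_test_error PX (V n) (m n) A \<sigma> n"
    have key: "ennreal (K * mte) \<le> SupC th" if th: "th \<in> estimators PX n" for th
    proof -
      have thj: "(\<lambda>(D, (x, z)). th D x z) \<in> borel_measurable (data_space PX n \<Otimes>\<^sub>M (PX \<Otimes>\<^sub>M borel))"
        using th unfolding estimators_def by simp
      have thc[measurable]: "(\<lambda>y. th (f y) (g y) (h y)) \<in> borel_measurable M"
        if "f \<in> measurable M (data_space PX n)" "g \<in> measurable M PX" "h \<in> borel_measurable M" for f g h and M :: "'b measure"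
        using measurable_compose[OF measurable_Pair[OF that(1) measurable_Pair[OF that(2,3)]] thj] by simp
      have thD: "(\<lambda>(x,z). th D x z) \<in> borel_measurable (PX \<Otimes>\<^sub>M borel)" if D: "D \<in> space (data_space PX n)" for D
      proof -
        have "(\<lambda>y. th D (fst y) (snd y)) \<in> borel_measurable (PX \<Otimes>\<^sub>M borel)"
          using D by measurable
        then show ?thesis by (simp add: case_prod_beta')
      qed
      define s where "s = sqrt (\<sigma>\<^sup>2+A)"
      define Lw where "Lw w D = excess_risk PX (mm w) A \<sigma> (th D)" for w D
      define FL where "FL w D = (\<integral>\<^sup>+x. (\<integral>\<^sup>+z. ennreal (normal_density (mm w x) s z * (th D x z - bayes_rule (mm w) A \<sigma> x z)\<^sup>2) \<partial>lborel) \<partial>PX)" for w D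
      have Lw_eq: "Lw w D = FL w D" if "D \<in> space (data_space PX n)" "w \<in> W" for w D
        unfolding Lw_def FL_def s_def by (rule excess_formula[OF PX A \<sigma> mmM[OF that(2)] thD[OF that(1)]])
      have FL_meas: "FL w \<in> borel_measurable (data_space PX n)" if w: "w \<in> W" for w
      proof -
        note mmM[OF w, measurable]
        have "(\<lambda>(D,x). \<integral>\<^sup>+z. ennreal (normal_density (mm w x) s z * (th D x z - bayes_rule (mm w) A \<sigma> x z)\<^sup>2) \<partial>lborel)
           \<in> borel_measurable (data_space PX n \<Otimes>\<^sub>M PX)"
          unfolding bayes_rule_def normal_density_def by measurable
        from sigma_finite_measure.borel_measurable_nn_integral[OF prob_space_imp_sigma_finite[OF PX] this]
        show ?thesis unfolding FL_def[abs_def] by simp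
      qed
      have Lw_meas: "Lw w \<in> borel_measurable (data_space PX n)" if w: "w \<in> W" for w
        using FL_meas[OF w] by (subst measurable_cong[where g="FL w"]) (auto simp: Lw_eq[OF _ w])
      define P where "P w D = (\<forall>u\<in>W. Lw w D \<le> Lw u D)" for w D
      have Pset: "{D\<in>space (data_space PX n). P w D} \<in> sets (data_space PX n)" if w: "w \<in> W" for w
      proof -
        have "{D\<in>space (data_space PX n). P w D} = (\<Inter>u\<in>W. {D\<in>space (data_space PX n). Lw w D \<le> Lw u D})"
          using Wne unfolding P_def by auto
        also have "\<dots> \<in> sets (data_space PX n)"
        proof (intro sets.finite_INT Wf Wne)
          fix u assume u: "u \<in> W"
          note Lw_meas[OF w, measurable] Lw_meas[OF u, measurable]
          show "{D\<in>space (data_space PX n). Lw w D \<le> Lw u D} \<in> sets (data_space PX n)" by measurable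
        qed
        finally show ?thesis .
      qed
      obtain xs where xs: "set xs = W" using finite_list[OF Wf] by blast
      define Vh where "Vh D = pick (\<lambda>w. P w D) xs (SOME v. v \<in> W)" for D
      have Vh_meas: "Vh \<in> measurable (data_space PX n) (count_space UNIV)"
        unfolding Vh_def[abs_def] by (rule pick_meas) (use Pset xs in auto)
      have Vh_prop: "Vh D \<in> W \<and> P (Vh D) D" if D: "D \<in> space (data_space PX n)" for D
      proof -
        have "\<exists>w\<in>set xs. P w D"
        proof -
          let ?S = "(\<lambda>w. Lw w D) ` W"
          have "Min ?S \<in> ?S" using Wf Wne by (intro Min_in) auto
          then obtain w where w: "w \<in> W" "Lw w D = Min ?S" by auto
          have "P w D" unfolding P_def using w Wf by (auto intro!: Min_le)
          then show ?thesis using w xs by auto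
        qed
        from pick_prop[OF this] show ?thesis unfolding Vh_def using xs by auto
      qed
      have lowb: "ennreal K \<le> Lw v D" if D: "D \<in> space (data_space PX n)" and v: "v \<in> W" and ne: "Vh D \<noteq> v" for D v
      proof -
        define w where "w = Vh D"
        have w: "w \<in> W" and Pw: "P w D" using Vh_prop[OF D] unfolding w_def by auto
        have le: "Lw w D \<le> Lw v D" using Pw v unfolding P_def by auto
        have "ennreal (k2/12) * (\<integral>\<^sup>+x. ennreal ((mm v x - mm w x)\<^sup>2) \<partial>PX) \<le> Lw v D + Lw w D"
          unfolding Lw_def k2_def
          by (rule two_point[OF PX A \<sigma> mmM[OF v] mmM[OF w] thD[OF D]]) (use close v w in auto)
        moreover have "ennreal ((\<delta> n)\<^sup>2) \<le> (\<integral>\<^sup>+x. ennreal ((mm v x - mm w x)\<^sup>2) \<partial>PX)"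
          using sep v w ne unfolding W_def mm_def w_def by auto
        ultimately have "ennreal (k2/12) * ennreal ((\<delta> n)\<^sup>2) \<le> Lw v D + Lw v D"
          using le by (meson add_left_mono mult_left_mono order_trans zero_le)
        moreover have "ennreal (k2/12) * ennreal ((\<delta> n)\<^sup>2) = 2 * ennreal K"
          unfolding K_def using k2nn by (simp add: ennreal_mult[symmetric] ennreal_numeral[symmetric] del: ennreal_numeral)
        moreover have "Lw v D + Lw v D = 2 * Lw v D" by (simp add: mult_2)
        ultimately have "2 * ennreal K \<le> 2 * Lw v D" by simp
        then show ?thesis by (subst (asm) ennreal_mult_le_mult_iff) auto
      qed
      define Sv where "Sv v = {D\<in>space (data_space PX n). Vh D \<noteq> v}" for v
      define Pv where "Pv v = sample_law PX (mm v) A \<sigma> n" for v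
      have setsP: "sets (Pv v) = sets (data_space PX n)" for v
        unfolding Pv_def by (rule sets_sample_law[OF PX])
      have spaceP: "space (Pv v) = space (data_space PX n)" for v
        using sets_eq_imp_space_eq[OF setsP] .
      have Sv_sets: "Sv v \<in> sets (Pv v)" for v
      proof -
        have "Sv v = Vh -` (UNIV - {v}) \<inter> space (data_space PX n)" unfolding Sv_def by auto
        also have "\<dots> \<in> sets (data_space PX n)" by (rule measurable_sets[OF Vh_meas]) auto
        finally show ?thesis using setsP by simp
      qed
      have perv: "ennreal (K * measure (Pv v) (Sv v)) \<le> (\<integral>\<^sup>+D. Lw v D \<partial>Pv v)" if v: "v \<in> W" for v
      proof -
        have "ennreal (K * measure (Pv v) (Sv v)) = ennreal K * ennreal (measure (Pv v) (Sv v))"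
          using Knn by (simp add: ennreal_mult)
        also have "\<dots> \<le> ennreal K * emeasure (Pv v) (Sv v)"
          by (intro mult_left_mono ennreal_measure_le) auto
        also have "\<dots> = (\<integral>\<^sup>+D. ennreal K * indicator (Sv v) D \<partial>Pv v)"
          by (rule nn_integral_cmult_indicator[symmetric, OF Sv_sets])
        also have "\<dots> \<le> (\<integral>\<^sup>+D. Lw v D \<partial>Pv v)"
        proof (intro nn_integral_mono)
          fix D assume D: "D \<in> space (Pv v)"
          show "ennreal K * indicator (Sv v) D \<le> Lw v D"
          proof (cases "D \<in> Sv v")
            case True
            then show ?thesis using lowb[of D v] v unfolding Sv_def by auto
          qed simp
        qed
        finally show ?thesis .
      qed
      have EvC: "(\<integral>\<^sup>+D. Lw v D \<partial>Pv v) \<le> SupC th" if v: "v \<in> W" for v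
        unfolding SupC_def Lw_def Pv_def using mmC[OF v] by (intro SUP_upper)
      define err where "err = (\<Sum>v\<in>W. measure (Pv v) (Sv v)) / real (card W)"
      have cardp: "real (card W) > 0" using Wf Wne by (simp add: card_gt_0_iff)
      have "ennreal (K * err) = ennreal (\<Sum>v\<in>W. K * measure (Pv v) (Sv v) * (1 / real (card W)))"
        unfolding err_def by (simp add: sum_distrib_left sum_divide_distrib)
      also have "\<dots> = (\<Sum>v\<in>W. ennreal (K * measure (Pv v) (Sv v) * (1 / real (card W))))"
        using Knn by (intro sum_ennreal[symmetric]) auto
      also have "\<dots> \<le> (\<Sum>v\<in>W. SupC th * ennreal (1 / real (card W)))"
      proof (intro sum_mono)
        fix v assume v: "v \<in> W"
        have "ennreal (K * measure (Pv v) (Sv v) * (1 / real (card W))) = ennreal (K * measure (Pv v) (Sv v)) * ennreal (1 / real (card W))"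
          by (intro ennreal_mult'') simp
        also have "\<dots> \<le> SupC th * ennreal (1 / real (card W))"
          using order_trans[OF perv[OF v] EvC[OF v]] by (intro mult_right_mono) auto
        finally show "ennreal (K * measure (Pv v) (Sv v) * (1 / real (card W))) \<le> SupC th * ennreal (1 / real (card W))" .
      qed
      also have "\<dots> = SupC th * (of_nat (card W) * ennreal (1 / real (card W)))"
        by (simp add: mult_ac)
      also have "of_nat (card W) * ennreal (1 / real (card W)) = 1"
        using cardp by (simp add: ennreal_of_nat_eq_real_of_nat ennreal_mult[symmetric])
      finally have errb: "ennreal (K * err) \<le> SupC th" by simp
      have err_eq: "err = (\<Sum>v\<in>V n. measure (sample_law PX (m n v) A \<sigma> n) {D \<in> space (data_space PX n). Vh D \<noteq> v}) / real (card (V n))"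
        unfolding err_def W_def Pv_def Sv_def mm_def ..
      have "mte \<le> err"
        unfolding mte_def min_test_error_def err_eq
        apply (rule cInf_lower)
         apply (rule image_eqI[OF _ Vh_meas])
         apply (rule refl)
        by (intro bdd_belowI[of _ 0]) (auto intro!: divide_nonneg_nonneg sum_nonneg)
      then have "ennreal (K * mte) \<le> ennreal (K * err)"
        using Knn by (intro ennreal_leI mult_left_mono)
      then show ?thesis using errb by (rule order_trans)
    qed
    have "ennreal (K * mte) \<le> minimax_EB PX C A \<sigma> n"
      unfolding minimax_EB_def using key unfolding SupC_def by (intro INF_greatest) auto
    then have "ennreal 24 * ennreal (K * mte) \<le> ennreal 24 * minimax_EB PX C A \<sigma> n"
      by (intro mult_left_mono) auto
    moreover have "ennreal (\<sigma>^4 / (\<sigma>\<^sup>2 + A)\<^sup>2 * (\<delta> n)\<^sup>2 * min_test_error PX (V n) (m n) A \<sigma> n) = ennreal 24 * ennreal (K * mte)"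
      unfolding K_def k2_def mte_def by (subst ennreal_mult'[symmetric]) (auto simp: field_simps)
    ultimately show "ennreal (\<sigma>^4 / (\<sigma>\<^sup>2 + A)\<^sup>2 * (\<delta> n)\<^sup>2 * min_test_error PX (V n) (m n) A \<sigma> n) \<le> ennreal 24 * minimax_EB PX C A \<sigma> n"
      by simp
  qed
qed


theorem lemma1:
  shows "\<exists>c::real. \<forall>(PX :: 'x measure) (C :: ('x \<Rightarrow> real) set) (A::real) (\<sigma>::real)
            (V :: nat \<Rightarrow> 'v set) (m :: nat \<Rightarrow> 'v \<Rightarrow> 'x \<Rightarrow> real) (\<delta> :: nat \<Rightarrow> real).
     prob_space PX \<and> A \<ge> 0 \<and> \<sigma> > 0
     \<and> (\<forall>n. finite (V n) \<and> V n \<noteq> {})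
     \<and> (\<forall>n. \<forall>v\<in>V n. m n v \<in> C \<and> m n v \<in> borel_measurable PX)
     \<and> (\<forall>n. \<delta> n > 0)
     \<and> (\<forall>n. \<forall>v\<in>V n. \<forall>v'\<in>V n. v \<noteq> v' \<longrightarrow>
           (\<integral>\<^sup>+ x. ennreal ((m n v x - m n v' x)\<^sup>2) \<partial>PX) \<ge> ennreal ((\<delta> n)\<^sup>2))
     \<and> ((\<lambda>n. SUP v\<in>V n. SUP v'\<in>V n. SUP x\<in>space PX. ereal ((m n v x - m n v' x)\<^sup>2))
           \<longlonglongrightarrow> 0)
     \<longrightarrow> (\<forall>\<^sub>F n in sequentially.
           ennreal (\<sigma>^4 / (\<sigma>\<^sup>2 + A)\<^sup>2 * (\<delta> n)\<^sup>2 * min_test_error PX (V n) (m n) A \<sigma> n)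
             \<le> ennreal c * minimax_EB PX C A \<sigma> n)"
  apply (rule exI[of _ 24])
  apply (intro allI impI)
  apply (elim conjE)
  apply (rule main_lemma)
         apply assumption+
  done

end
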